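(* Let $M=(E,\mathcal{I})$ be a matroid with $\sigma(M)=\lambda(M)=k$. Then any two distinct cocircuits of $M$ of size $k$ are disjoint. In particular, if $G$ is a connected graph (multiple edges allowed) with $\lambda(G)=\sigma(G)=k$, then any two distinct minimal edge cuts of $G$ having exactly $k$ edges have no edge in common.
   Context: For a matroid $M$, $\sigma(M)$ is the maximum number of pairwise disjoint bases and $\lambda(M)$ (the cogirth) is the minimum size of a cocircuit (a minimal set meeting every base). For a connected graph $G$, $\lambda(G)$ is the edge connectivity (the least number of edges whose removal disconnects $G$) and $\sigma(G)$ is the maximum number of pairwise edge-disjoint spanning trees of $G$; these are the cogirth and base packing number of the cycle matroid of $G$, whose cocircuits are the minimal edge cuts. *)

theory Defs
  imports Main "HOL-Library.Extended_Nat"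
begin

definition matroid :: "'a set \<Rightarrow> 'a set set \<Rightarrow> bool" where
  "matroid E \<I> \<longleftrightarrow> finite E \<and> (\<forall>X\<in>\<I>. X \<subseteq> E) \<and> {} \<in> \<I>
     \<and> (\<forall>X Y. Y \<in> \<I> \<longrightarrow> X \<subseteq> Y \<longrightarrow> X \<in> \<I>)
     \<and> (\<forall>X Y. X \<in> \<I> \<longrightarrow> Y \<in> \<I> \<longrightarrow> card X < card Y \<longrightarrow> (\<exists>y\<in>Y - X. insert y X \<in> \<I>))"

definition is_base :: "'a set \<Rightarrow> 'a set set \<Rightarrow> 'a set \<Rightarrow> bool" where
  "is_base E \<I> B \<longleftrightarrow> B \<in> \<I> \<and> (\<forall>X\<in>\<I>. B \<subseteq> X \<longrightarrow> X = B)"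

definition meets_all_bases :: "'a set \<Rightarrow> 'a set set \<Rightarrow> 'a set \<Rightarrow> bool" where
  "meets_all_bases E \<I> C \<longleftrightarrow> C \<subseteq> E \<and> (\<forall>B. is_base E \<I> B \<longrightarrow> C \<inter> B \<noteq> {})"

definition is_cocircuit :: "'a set \<Rightarrow> 'a set set \<Rightarrow> 'a set \<Rightarrow> bool" where
  "is_cocircuit E \<I> C \<longleftrightarrow> meets_all_bases E \<I> C
     \<and> (\<forall>D. D \<subset> C \<longrightarrow> \<not> meets_all_bases E \<I> D)"

text \<open>sigma(M): maximum number of pairwise disjoint bases (infinity if unbounded,
  which only happens for rank 0); lambda(M): cogirth, minimum size of a cocircuit
  (infinity if there is no cocircuit).\<close>
definition base_packing :: "'a set \<Rightarrow> 'a set set \<Rightarrow> enat" where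
  "base_packing E \<I> = Sup {enat n | n. \<exists>B :: nat \<Rightarrow> 'a set.
      (\<forall>i<n. is_base E \<I> (B i)) \<and> (\<forall>i<n. \<forall>j<n. i \<noteq> j \<longrightarrow> B i \<inter> B j = {})}"

definition cogirth :: "'a set \<Rightarrow> 'a set set \<Rightarrow> enat" where
  "cogirth E \<I> = Inf {enat (card C) | C. is_cocircuit E \<I> C}"

text \<open>A multigraph is given by a vertex set V, an edge set Ed and an incidence
  map ends assigning to each edge its set of one (loop) or two end vertices.\<close>
definition multigraph :: "'v set \<Rightarrow> 'e set \<Rightarrow> ('e \<Rightarrow> 'v set) \<Rightarrow> bool" where
  "multigraph V Ed ends \<longleftrightarrow> finite V \<and> finite Ed
     \<and> (\<forall>e\<in>Ed. ends e \<subseteq> V \<and> 1 \<le> card (ends e) \<and> card (ends e) \<le> 2)"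

inductive reach :: "('e \<Rightarrow> 'v set) \<Rightarrow> 'e set \<Rightarrow> 'v \<Rightarrow> 'v \<Rightarrow> bool"
  for ends :: "'e \<Rightarrow> 'v set" and F :: "'e set" where
  refl: "reach ends F u u"
| step: "reach ends F u v \<Longrightarrow> e \<in> F \<Longrightarrow> v \<in> ends e \<Longrightarrow> w \<in> ends e \<Longrightarrow> reach ends F u w"

definition connected_by :: "'v set \<Rightarrow> ('e \<Rightarrow> 'v set) \<Rightarrow> 'e set \<Rightarrow> bool" where
  "connected_by V ends F \<longleftrightarrow> (\<forall>u\<in>V. \<forall>v\<in>V. reach ends F u v)"

definition connected_graph :: "'v set \<Rightarrow> 'e set \<Rightarrow> ('e \<Rightarrow> 'v set) \<Rightarrow> bool" where
  "connected_graph V Ed ends \<longleftrightarrow> multigraph V Ed ends \<and> V \<noteq> {} \<and> connected_by V ends Ed"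

text \<open>An edge set F is acyclic iff no edge of F lies on a cycle of F, i.e. for no
  edge e in F are its ends joined in F - {e} (loops are cycles).\<close>
definition acyclic_edges :: "('e \<Rightarrow> 'v set) \<Rightarrow> 'e set \<Rightarrow> bool" where
  "acyclic_edges ends F \<longleftrightarrow> (\<forall>e\<in>F. \<not> (\<forall>u\<in>ends e. \<forall>v\<in>ends e. reach ends (F - {e}) u v))"

definition spanning_tree :: "'v set \<Rightarrow> 'e set \<Rightarrow> ('e \<Rightarrow> 'v set) \<Rightarrow> 'e set \<Rightarrow> bool" where
  "spanning_tree V Ed ends T \<longleftrightarrow> T \<subseteq> Ed \<and> connected_by V ends T \<and> acyclic_edges ends T"

definition edge_cut :: "'v set \<Rightarrow> 'e set \<Rightarrow> ('e \<Rightarrow> 'v set) \<Rightarrow> 'e set \<Rightarrow> bool" where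
  "edge_cut V Ed ends C \<longleftrightarrow> C \<subseteq> Ed \<and> \<not> connected_by V ends (Ed - C)"

definition minimal_edge_cut :: "'v set \<Rightarrow> 'e set \<Rightarrow> ('e \<Rightarrow> 'v set) \<Rightarrow> 'e set \<Rightarrow> bool" where
  "minimal_edge_cut V Ed ends C \<longleftrightarrow> edge_cut V Ed ends C
     \<and> (\<forall>D. D \<subset> C \<longrightarrow> \<not> edge_cut V Ed ends D)"

definition edge_connectivity :: "'v set \<Rightarrow> 'e set \<Rightarrow> ('e \<Rightarrow> 'v set) \<Rightarrow> enat" where
  "edge_connectivity V Ed ends = Inf {enat (card C) | C. edge_cut V Ed ends C}"

definition tree_packing :: "'v set \<Rightarrow> 'e set \<Rightarrow> ('e \<Rightarrow> 'v set) \<Rightarrow> enat" where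
  "tree_packing V Ed ends = Sup {enat n | n. \<exists>T :: nat \<Rightarrow> 'e set.
      (\<forall>i<n. spanning_tree V Ed ends (T i)) \<and> (\<forall>i<n. \<forall>j<n. i \<noteq> j \<longrightarrow> T i \<inter> T j = {})}"

end

theory Submission
  imports Defs
begin

lemma sup_attained:
  assumes "Sup {enat n | n. P n} = enat k" and "P 0"
  shows "P k"
proof -
  let ?S = "{enat n | n. P n}"
  have ne: "?S \<noteq> {}" using assms(2) by blast
  have fin: "finite ?S"
  proof (rule ccontr)
    assume "\<not> finite ?S"
    then have "Sup ?S = \<infinity>" using ne by (simp add: Sup_enat_def)
    then show False using assms(1) by simp
  qed
  have "Sup ?S = Max ?S" by (subst Sup_enat_def) (simp only: ne fin if_False if_True)
  then have "enat k \<in> ?S" using Max_in[OF fin ne] assms(1) by simp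
  then show ?thesis by auto
qed

lemma pigeon:
  fixes B :: "nat \<Rightarrow> 'x set"
  assumes fin: "finite C" and ck: "card C = k"
    and meet: "\<forall>i<k. C \<inter> B i \<noteq> {}"
    and disj: "\<forall>i<k. \<forall>j<k. i \<noteq> j \<longrightarrow> B i \<inter> B j = {}"
    and eC: "e \<in> C"
  shows "\<exists>j<k. C \<inter> B j = {e}"
proof -
  define c where "c i = (SOME x. x \<in> C \<inter> B i)" for i
  have c: "c i \<in> C \<inter> B i" if "i < k" for i
    using meet that unfolding c_def by (metis (mono_tags) ex_in_conv someI)
  have inj: "inj_on c {..<k}"
  proof (rule inj_onI)
    fix i j assume "i \<in> {..<k}" "j \<in> {..<k}" "c i = c j"
    then show "i = j" using c[of i] c[of j] disj by auto
  qed
  have sub: "c ` {..<k} \<subseteq> C" using c by auto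
  have "card (c ` {..<k}) = card C" using card_image[OF inj] ck by simp
  then have eq: "c ` {..<k} = C" using card_subset_eq[OF fin sub] by simp
  then obtain j where j: "j < k" "e = c j" using eC by auto
  have "C \<inter> B j = {e}"
  proof
    show "{e} \<subseteq> C \<inter> B j" using c[OF j(1)] j by auto
    show "C \<inter> B j \<subseteq> {e}"
    proof
      fix x assume x: "x \<in> C \<inter> B j"
      then obtain i where i: "i < k" "x = c i" using eq by auto
      have "i = j"
      proof (rule ccontr)
        assume "i \<noteq> j"
        then have "B i \<inter> B j = {}" using disj i j by auto
        then show False using c[OF i(1)] i x by auto
      qed
      then show "x \<in> {e}" using i j by simp
    qed
  qed
  then show ?thesis using j by blast
qed

lemma matroid_aug:
  assumes "matroid E I" "X \<in> I" "Y \<in> I" "card X < card Y"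
  shows "\<exists>y\<in>Y - X. insert y X \<in> I"
proof -
  have "\<forall>X Y. X \<in> I \<longrightarrow> Y \<in> I \<longrightarrow> card X < card Y \<longrightarrow> (\<exists>y\<in>Y - X. insert y X \<in> I)"
    using assms(1) unfolding matroid_def by (elim conjE)
  then show ?thesis using assms by blast
qed
lemma matroid_sub: "matroid E I \<Longrightarrow> Y \<in> I \<Longrightarrow> X \<subseteq> Y \<Longrightarrow> X \<in> I"
  unfolding matroid_def by (elim conjE) blast
lemma matroid_fin: "matroid E I \<Longrightarrow> Y \<in> I \<Longrightarrow> finite Y"
  unfolding matroid_def by (elim conjE) (meson finite_subset)
lemma matroid_finE: "matroid E I \<Longrightarrow> finite E"
  unfolding matroid_def by (elim conjE)

lemma base_indep: "is_base E I B \<Longrightarrow> B \<in> I"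
  by (simp add: is_base_def)

lemma base_max: "is_base E I B \<Longrightarrow> X \<in> I \<Longrightarrow> B \<subseteq> X \<Longrightarrow> X = B"
  by (simp add: is_base_def)

lemma base_card:
  assumes m: "matroid E I" and b1: "is_base E I B1" and b2: "is_base E I B2"
  shows "card B1 = card B2"
proof -
  have aug: "\<And>X Y. X \<in> I \<Longrightarrow> Y \<in> I \<Longrightarrow> card X < card Y \<Longrightarrow> \<exists>y\<in>Y - X. insert y X \<in> I"
    using matroid_aug[OF m] by blast
  have no: "\<not> card Ba < card Bb" if ba: "is_base E I Ba" and bb: "is_base E I Bb" for Ba Bb
  proof
    assume "card Ba < card Bb"
    then obtain y where y: "y \<in> Bb - Ba" "insert y Ba \<in> I"
      using aug[OF base_indep[OF ba] base_indep[OF bb]] by blast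
    then have "insert y Ba = Ba" using base_max[OF ba y(2)] by blast
    then show False using y by blast
  qed
  show ?thesis using no[OF b1 b2] no[OF b2 b1] by simp
qed

lemma indep_card_base:
  assumes m: "matroid E I" and b: "is_base E I B" and X: "X \<in> I" and c: "card X = card B"
  shows "is_base E I X"
  unfolding is_base_def
proof (intro conjI ballI impI)
  show "X \<in> I" by fact
  fix Y assume Y: "Y \<in> I" "X \<subseteq> Y"
  have aug: "\<And>X Y. X \<in> I \<Longrightarrow> Y \<in> I \<Longrightarrow> card X < card Y \<Longrightarrow> \<exists>y\<in>Y - X. insert y X \<in> I"
    using matroid_aug[OF m] by blast
  have finY: "finite Y" using matroid_fin[OF m Y(1)] .
  show "Y = X"
  proof (rule ccontr)
    assume "Y \<noteq> X"
    then have "X \<subset> Y" using Y by auto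
    then have "card X < card Y" using finY psubset_card_mono by blast
    then have "card B < card Y" using c by simp
    then obtain y where y: "y \<in> Y - B" "insert y B \<in> I"
      using aug[OF base_indep[OF b] Y(1)] by blast
    then have "insert y B = B" using base_max[OF b y(2)] by blast
    then show False using y by blast
  qed
qed

lemma matroid_part:
  assumes m: "matroid E I" and bp: "base_packing E I = enat k"
    and cC: "is_cocircuit E I C" and cD: "is_cocircuit E I D" and ne: "C \<noteq> D"
    and kC: "card C = k" and kD: "card D = k"
  shows "C \<inter> D = {}"
proof (rule ccontr)
  assume "C \<inter> D \<noteq> {}"
  then obtain e where eC: "e \<in> C" and eD: "e \<in> D" by blast
  have finE: "finite E" using matroid_finE[OF m] .
  have CE: "C \<subseteq> E" and DE: "D \<subseteq> E" using cC cD unfolding is_cocircuit_def meets_all_bases_def by auto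
  have finC: "finite C" using finE CE finite_subset by blast
  have finD: "finite D" using finE DE finite_subset by blast
  have "\<exists>B :: nat \<Rightarrow> 'a set. (\<forall>i<k. is_base E I (B i)) \<and> (\<forall>i<k. \<forall>j<k. i \<noteq> j \<longrightarrow> B i \<inter> B j = {})"
    by (rule sup_attained[where P = "\<lambda>n. \<exists>B :: nat \<Rightarrow> 'a set. (\<forall>i<n. is_base E I (B i)) \<and> (\<forall>i<n. \<forall>j<n. i \<noteq> j \<longrightarrow> B i \<inter> B j = {})"])
      (use bp in \<open>simp_all add: base_packing_def\<close>)
  then obtain B :: "nat \<Rightarrow> 'a set" where Bb: "\<forall>i<k. is_base E I (B i)"
    and Bd: "\<forall>i<k. \<forall>j<k. i \<noteq> j \<longrightarrow> B i \<inter> B j = {}" by blast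
  have mC: "\<forall>i<k. C \<inter> B i \<noteq> {}" using Bb cC unfolding is_cocircuit_def meets_all_bases_def by blast
  have mD: "\<forall>i<k. D \<inter> B i \<noteq> {}" using Bb cD unfolding is_cocircuit_def meets_all_bases_def by blast
  obtain j where j: "j < k" "C \<inter> B j = {e}" using pigeon[OF finC kC mC Bd eC] by blast
  have DBj: "D \<inter> B j = {e}"
  proof -
    obtain j' where j': "j' < k" "D \<inter> B j' = {e}" using pigeon[OF finD kD mD Bd eD] by blast
    have "j' = j"
    proof (rule ccontr)
      assume "j' \<noteq> j"
      then have "B j' \<inter> B j = {}" using Bd j j' by auto
      then show False using j j' by blast
    qed
    then show ?thesis using j' by simp
  qed
  define Bj where "Bj = B j"
  have bj: "is_base E I Bj" using Bb j unfolding Bj_def by blast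
  have CBj: "C \<inter> Bj = {e}" and DBj': "D \<inter> Bj = {e}" using j DBj unfolding Bj_def by auto
  have "\<not> C \<subseteq> D"
  proof
    assume "C \<subseteq> D"
    then have "C \<subset> D" using ne by blast
    then show False using cC cD unfolding is_cocircuit_def by blast
  qed
  then obtain f where fC: "f \<in> C" and fD: "f \<notin> D" by blast
  have fe: "f \<noteq> e" using fD eD by blast
  have BjI: "Bj \<in> I" using base_indep[OF bj] .
  have finBj: "finite Bj" using matroid_fin[OF m BjI] .
  define I0 where "I0 = Bj - {e}"
  have eBj: "e \<in> Bj" using CBj by blast
  have I0I: "I0 \<in> I" using matroid_sub[OF m BjI] unfolding I0_def by blast
  have cI0: "card (insert x I0) = card Bj" if "x \<notin> I0" for x
    using that finBj eBj unfolding I0_def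
    by (metis card_Suc_Diff1 card_insert_disjoint finite_Diff)
  have fBj: "f \<notin> Bj" using CBj fC fe by blast
  have step1: "insert f I0 \<notin> I"
  proof
    assume fi: "insert f I0 \<in> I"
    have "is_base E I (insert f I0)"
      using indep_card_base[OF m bj fi] cI0[of f] fBj unfolding I0_def by blast
    moreover have "D \<inter> insert f I0 = {}" using DBj' fD unfolding I0_def by blast
    ultimately show False using cD unfolding is_cocircuit_def meets_all_bases_def by blast
  qed
  have "C - {f} \<subset> C" using fC by blast
  then have "\<not> meets_all_bases E I (C - {f})" using cC unfolding is_cocircuit_def by blast
  then obtain B2 where b2: "is_base E I B2" and B2C: "(C - {f}) \<inter> B2 = {}"
    using CE unfolding meets_all_bases_def by blast
  have "card B2 = card Bj" using base_card[OF m b2 bj] .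
  moreover have "card I0 < card Bj" using card_Diff1_less[OF finBj eBj] unfolding I0_def .
  ultimately have "card I0 < card B2" by simp
  then obtain y where y: "y \<in> B2 - I0" "insert y I0 \<in> I"
    using matroid_aug[OF m I0I base_indep[OF b2]] by blast
  have "is_base E I (insert y I0)"
    using indep_card_base[OF m bj y(2)] cI0[of y] y(1) by blast
  then have "C \<inter> insert y I0 \<noteq> {}" using cC unfolding is_cocircuit_def meets_all_bases_def by blast
  moreover have "C \<inter> I0 = {}" using CBj unfolding I0_def by blast
  ultimately have "y \<in> C" by blast
  then have "y = f" using y B2C by blast
  then show False using y step1 by simp
qed

lemma reach_trans: "reach ends F b c \<Longrightarrow> reach ends F a b \<Longrightarrow> reach ends F a c"
  by (induction rule: reach.induct) (auto intro: reach.step)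

lemma reach_sym: "reach ends F a b \<Longrightarrow> reach ends F b a"
proof (induction rule: reach.induct)
  case (refl u) then show ?case by (rule reach.refl)
next
  case (step u v e w)
  have "reach ends F w v" using step(2,3,4) by (meson reach.refl reach.step)
  then show ?case using reach_trans step(5) by metis
qed

lemma reach_mono: "reach ends F a b \<Longrightarrow> F \<subseteq> G \<Longrightarrow> reach ends G a b"
  by (induction rule: reach.induct) (auto intro: reach.intros)

lemma reach_insert:
  assumes "\<forall>x\<in>ends g. \<forall>y\<in>ends g. reach ends F x y"
  shows "reach ends (insert g F) a b \<Longrightarrow> reach ends F a b"
proof (induction rule: reach.induct)
  case (refl u) then show ?case by (rule reach.refl)
next
  case (step u v e w)
  show ?case
  proof (cases "e = g")
    case True
    then have "reach ends F v w" using assms step by blast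
    then show ?thesis using reach_trans step by metis
  next
    case False
    then show ?thesis using step reach.step by fastforce
  qed
qed

lemma reach_split: "reach ends T a w \<Longrightarrow> a \<in> ends e \<Longrightarrow> \<exists>z\<in>ends e. reach ends (T - {e}) z w"
proof (induction rule: reach.induct)
  case (refl u) then show ?case using reach.refl[of ends "T - {e}" u] by blast
next
  case (step u v g w)
  then obtain z where z: "z \<in> ends e" "reach ends (T - {e}) z v" by blast
  show ?case
  proof (cases "g = e")
    case True
    then show ?thesis using step reach.refl[of ends "T - {e}" w] by blast
  next
    case False
    then have "reach ends (T - {e}) z w" using z step reach.step[of ends "T - {e}" z v g w] by blast
    then show ?thesis using z by blast
  qed
qed

lemma card2:
  assumes "card S \<le> 2" "1 \<le> card S" "z1 \<in> S" "z2 \<in> S" "z1 \<noteq> z2" "x \<in> S"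
  shows "x = z1 \<or> x = z2"
proof (rule ccontr)
  assume "\<not> (x = z1 \<or> x = z2)"
  have fin: "finite S" using assms(2) card.infinite by fastforce
  have "{z1,z2,x} \<subseteq> S" using assms by blast
  then have "card {z1,z2,x} \<le> card S" using card_mono fin by blast
  moreover have "card {z1,z2,x} = 3" using \<open>\<not> (x = z1 \<or> x = z2)\<close> assms(5) by auto
  ultimately show False using assms(1) by simp
qed

lemma mg_ends: "multigraph V Ed ends \<Longrightarrow> h \<in> Ed \<Longrightarrow> ends h \<subseteq> V \<and> 1 \<le> card (ends h) \<and> card (ends h) \<le> 2"
  by (simp add: multigraph_def)

lemma mec_min: "minimal_edge_cut V Ed ends C \<Longrightarrow> D \<subset> C \<Longrightarrow> \<not> edge_cut V Ed ends D"
  by (simp add: minimal_edge_cut_def)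

lemma trans3: "reach ends F a b \<Longrightarrow> reach ends F b c \<Longrightarrow> reach ends F a c"
  using reach_trans by metis

lemma cut_char:
  assumes g: "connected_graph V Ed ends" and TE: "T \<subseteq> Ed" and Tc: "connected_by V ends T"
    and eT: "e \<in> T" and TC: "T \<inter> C \<subseteq> {e}" and mc: "minimal_edge_cut V Ed ends C"
  shows "C = {g \<in> Ed. \<exists>x\<in>ends g. \<exists>y\<in>ends g. \<not> reach ends (T - {e}) x y}"
proof -
  define F where "F = T - {e}"
  define S where "S = Ed - C"
  have FS: "F \<subseteq> S" using TE TC unfolding F_def S_def by blast
  have mg: "multigraph V Ed ends" using g by (simp add: connected_graph_def)
  have eE: "e \<in> Ed" using eT TE by blast
  have endsV: "\<And>h. h \<in> Ed \<Longrightarrow> ends h \<subseteq> V" using mg_ends[OF mg] by blast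
  have c12: "1 \<le> card (ends e)" "card (ends e) \<le> 2" using mg_ends[OF mg eE] by auto
  then have "ends e \<noteq> {}" by (metis card.empty not_one_le_zero)
  then obtain u where u: "u \<in> ends e" by blast
  have uV: "u \<in> V" using u endsV[OF eE] by blast
  have cover: "\<exists>z\<in>ends e. reach ends F z w" if "w \<in> V" for w
  proof -
    have "reach ends T u w" using Tc uV that unfolding connected_by_def by blast
    then show ?thesis using reach_split[of ends T u w e] u unfolding F_def by blast
  qed
  have CE: "C \<subseteq> Ed" using mc by (simp add: minimal_edge_cut_def edge_cut_def)
  have nS: "\<not> connected_by V ends S" using mc by (simp add: minimal_edge_cut_def edge_cut_def S_def)
  have K: "\<not> (\<forall>z1\<in>ends e. \<forall>z2\<in>ends e. reach ends S z1 z2)"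
  proof
    assume all: "\<forall>z1\<in>ends e. \<forall>z2\<in>ends e. reach ends S z1 z2"
    have "connected_by V ends S" unfolding connected_by_def
    proof (intro ballI)
      fix a b assume a: "a \<in> V" and b: "b \<in> V"
      obtain z1 where z1: "z1 \<in> ends e" "reach ends F z1 a" using cover[OF a] by blast
      obtain z2 where z2: "z2 \<in> ends e" "reach ends F z2 b" using cover[OF b] by blast
      have h1: "reach ends S a z1" using reach_sym[OF reach_mono[OF z1(2) FS]] .
      have h2: "reach ends S z1 z2" using all z1(1) z2(1) by blast
      have h3: "reach ends S z2 b" using reach_mono[OF z2(2) FS] .
      show "reach ends S a b" using trans3[OF trans3[OF h1 h2] h3] .
    qed
    then show False using nS by blast
  qed
  show ?thesis
  proof
    show "C \<subseteq> {g \<in> Ed. \<exists>x\<in>ends g. \<exists>y\<in>ends g. \<not> reach ends (T - {e}) x y}"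
    proof
      fix g assume gC: "g \<in> C"
      have "C - {g} \<subset> C" using gC by blast
      then have "\<not> edge_cut V Ed ends (C - {g})" using mec_min[OF mc] by blast
      moreover have "C - {g} \<subseteq> Ed" using CE by blast
      ultimately have con: "connected_by V ends (Ed - (C - {g}))" by (simp add: edge_cut_def)
      have eq: "Ed - (C - {g}) = insert g S" using gC CE unfolding S_def by blast
      have "\<exists>x\<in>ends g. \<exists>y\<in>ends g. \<not> reach ends F x y"
      proof (rule ccontr)
        assume na: "\<not> (\<exists>x\<in>ends g. \<exists>y\<in>ends g. \<not> reach ends F x y)"
        have allg: "\<forall>x\<in>ends g. \<forall>y\<in>ends g. reach ends S x y"
        proof (intro ballI)
          fix x y assume "x \<in> ends g" "y \<in> ends g"
          then have "reach ends F x y" using na by blast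
          then show "reach ends S x y" using FS by (rule reach_mono)
        qed
        have "connected_by V ends S" unfolding connected_by_def
        proof (intro ballI)
          fix a b assume "a \<in> V" "b \<in> V"
          then have "reach ends (insert g S) a b" using con eq unfolding connected_by_def by simp
          then show "reach ends S a b" using reach_insert[OF allg] by blast
        qed
        then show False using nS by blast
      qed
      then show "g \<in> {g \<in> Ed. \<exists>x\<in>ends g. \<exists>y\<in>ends g. \<not> reach ends (T - {e}) x y}"
        using gC CE unfolding F_def by blast
    qed
  next
    show "{g \<in> Ed. \<exists>x\<in>ends g. \<exists>y\<in>ends g. \<not> reach ends (T - {e}) x y} \<subseteq> C"
    proof
      fix g assume "g \<in> {g \<in> Ed. \<exists>x\<in>ends g. \<exists>y\<in>ends g. \<not> reach ends (T - {e}) x y}"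
      then obtain x y where gE: "g \<in> Ed" and x: "x \<in> ends g" and y: "y \<in> ends g"
        and nr: "\<not> reach ends F x y" unfolding F_def by blast
      show "g \<in> C"
      proof (rule ccontr)
        assume "g \<notin> C"
        then have gS: "g \<in> S" using gE unfolding S_def by blast
        have xV: "x \<in> V" and yV: "y \<in> V" using x y endsV[OF gE] by auto
        obtain z1 where z1: "z1 \<in> ends e" "reach ends F z1 x" using cover[OF xV] by blast
        obtain z2 where z2: "z2 \<in> ends e" "reach ends F z2 y" using cover[OF yV] by blast
        have ne: "z1 \<noteq> z2"
        proof
          assume "z1 = z2"
          then have "reach ends F x y" using trans3[OF reach_sym[OF z1(2)]] z2(2) by simp
          then show False using nr by blast
        qed
        have r1: "reach ends S z1 x" using reach_mono[OF z1(2) FS] .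
        have r2: "reach ends S x y" using reach.step[OF reach.refl[of ends S x] gS x y] .
        have r3: "reach ends S y z2" using reach_sym[OF reach_mono[OF z2(2) FS]] .
        have r12: "reach ends S z1 z2" using trans3[OF trans3[OF r1 r2] r3] .
        have r21: "reach ends S z2 z1" using reach_sym[OF r12] .
        have "\<forall>a\<in>ends e. \<forall>b\<in>ends e. reach ends S a b"
        proof (intro ballI)
          fix a b assume ab: "a \<in> ends e" "b \<in> ends e"
          have "a = z1 \<or> a = z2" using card2[OF c12(2) c12(1) z1(1) z2(1) ne ab(1)] .
          moreover have "b = z1 \<or> b = z2" using card2[OF c12(2) c12(1) z1(1) z2(1) ne ab(2)] .
          ultimately show "reach ends S a b" using r12 r21 reach.refl[of ends S] by blast
        qed
        then show False using K by blast
      qed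
    qed
  qed
qed

lemma graph_part:
  assumes g: "connected_graph V Ed ends" and tp: "tree_packing V Ed ends = enat k"
    and cC: "minimal_edge_cut V Ed ends C" and cD: "minimal_edge_cut V Ed ends D" and ne: "C \<noteq> D"
    and kC: "card C = k" and kD: "card D = k"
  shows "C \<inter> D = {}"
proof (rule ccontr)
  assume "C \<inter> D \<noteq> {}"
  then obtain e where eC: "e \<in> C" and eD: "e \<in> D" by blast
  have finE: "finite Ed" using g by (simp add: connected_graph_def multigraph_def)
  have CE: "C \<subseteq> Ed" using cC by (simp add: minimal_edge_cut_def edge_cut_def)
  have DE: "D \<subseteq> Ed" using cD by (simp add: minimal_edge_cut_def edge_cut_def)
  have finC: "finite C" using finE CE finite_subset by blast
  have finD: "finite D" using finE DE finite_subset by blast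
  have "\<exists>T :: nat \<Rightarrow> 'b set. (\<forall>i<k. spanning_tree V Ed ends (T i)) \<and> (\<forall>i<k. \<forall>j<k. i \<noteq> j \<longrightarrow> T i \<inter> T j = {})"
    by (rule sup_attained[where P = "\<lambda>n. \<exists>T :: nat \<Rightarrow> 'b set. (\<forall>i<n. spanning_tree V Ed ends (T i)) \<and> (\<forall>i<n. \<forall>j<n. i \<noteq> j \<longrightarrow> T i \<inter> T j = {})"])
      (use tp in \<open>simp_all add: tree_packing_def\<close>)
  then obtain T :: "nat \<Rightarrow> 'b set" where Tb: "\<forall>i<k. spanning_tree V Ed ends (T i)"
    and Td: "\<forall>i<k. \<forall>j<k. i \<noteq> j \<longrightarrow> T i \<inter> T j = {}" by blast
  have meet: "X \<inter> T i \<noteq> {}" if "minimal_edge_cut V Ed ends X" "i < k" for X i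
  proof
    assume "X \<inter> T i = {}"
    moreover have "T i \<subseteq> Ed" using Tb that by (simp add: spanning_tree_def)
    ultimately have "T i \<subseteq> Ed - X" by blast
    note sub = this
    have "connected_by V ends (Ed - X)" unfolding connected_by_def
    proof (intro ballI)
      fix a b assume "a \<in> V" "b \<in> V"
      moreover have "connected_by V ends (T i)" using Tb that by (simp add: spanning_tree_def)
      ultimately have "reach ends (T i) a b" unfolding connected_by_def by blast
      then show "reach ends (Ed - X) a b" using sub by (rule reach_mono)
    qed
    then show False using that by (simp add: minimal_edge_cut_def edge_cut_def)
  qed
  have mC: "\<forall>i<k. C \<inter> T i \<noteq> {}" using meet[OF cC] by simp
  have mD: "\<forall>i<k. D \<inter> T i \<noteq> {}" using meet[OF cD] by simp
  obtain j where j: "j < k" "C \<inter> T j = {e}" using pigeon[OF finC kC mC Td eC] by blast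
  have DTj: "D \<inter> T j = {e}"
  proof -
    obtain j' where j': "j' < k" "D \<inter> T j' = {e}" using pigeon[OF finD kD mD Td eD] by blast
    have "j' = j"
    proof (rule ccontr)
      assume "j' \<noteq> j"
      then have "T j' \<inter> T j = {}" using Td j j' by auto
      then show False using j j' by blast
    qed
    then show ?thesis using j' by simp
  qed
  have st: "T j \<subseteq> Ed" "connected_by V ends (T j)" using Tb j by (simp_all add: spanning_tree_def)
  have eT: "e \<in> T j" using j by blast
  have tc: "T j \<inter> C \<subseteq> {e}" using j(2) by blast
  have td: "T j \<inter> D \<subseteq> {e}" using DTj by blast
  have "C = {g \<in> Ed. \<exists>x\<in>ends g. \<exists>y\<in>ends g. \<not> reach ends (T j - {e}) x y}"
    by (rule cut_char[OF g st eT tc cC])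
  moreover have "D = {g \<in> Ed. \<exists>x\<in>ends g. \<exists>y\<in>ends g. \<not> reach ends (T j - {e}) x y}"
    by (rule cut_char[OF g st eT td cD])
  ultimately show False using ne by simp
qed

theorem mainTheorem2:
  shows "(\<forall>(E :: 'a set) \<I> (k :: nat) C D.
            matroid E \<I> \<longrightarrow> base_packing E \<I> = enat k \<longrightarrow> cogirth E \<I> = enat k \<longrightarrow>
            is_cocircuit E \<I> C \<longrightarrow> is_cocircuit E \<I> D \<longrightarrow> C \<noteq> D \<longrightarrow>
            card C = k \<longrightarrow> card D = k \<longrightarrow> C \<inter> D = {})
       \<and> (\<forall>(V :: 'v set) (Ed :: 'e set) ends (k :: nat) C D.
            connected_graph V Ed ends \<longrightarrow>
            edge_connectivity V Ed ends = enat k \<longrightarrow> tree_packing V Ed ends = enat k \<longrightarrow>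
            minimal_edge_cut V Ed ends C \<longrightarrow> minimal_edge_cut V Ed ends D \<longrightarrow> C \<noteq> D \<longrightarrow>
            card C = k \<longrightarrow> card D = k \<longrightarrow> C \<inter> D = {})"
  apply (intro conjI allI impI)
   apply (rule matroid_part; assumption)
  apply (rule graph_part; assumption)
  done

end
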